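(* Let $k_+,k_-,t$ be integers with $0\leq k_-\leq k_+$, $k_++k_-\geq 1$ and $t>0$. Then for any real number $\epsilon>0$ there is an integer $\lambda$ and infinitely many values of $n$ such that $\mathbb{Z}^n$ can be $\lambda$-lattice-packed by $\mathcal{B}(n,t,k_+,k_-)$ with density $\delta=\Omega(n^{-\epsilon})$.
   Context: $\mathcal{B}(n,t,k_+,k_-)=\{\mathbf{x}\in\mathbb{Z}^n : -k_-\le x_i\le k_+ \text{ for all } i,\ \mathrm{wt}(\mathbf{x})\le t\}$, where $\mathrm{wt}$ is the Hamming weight. A set $\mathcal{B}\subseteq\mathbb{Z}^n$ $\lambda$-packs $\mathbb{Z}^n$ by a lattice $\Lambda\subseteq\mathbb{Z}^n$ if every $\mathbf{z}\in\mathbb{Z}^n$ lies in $\mathbf{v}+\mathcal{B}$ for at most $\lambda$ distinct $\mathbf{v}\in\Lambda$; the density is $|\mathcal{B}|/\mathrm{vol}(\Lambda)$ with $\mathrm{vol}(\Lambda)=|\mathbb{Z}^n/\Lambda|$. The asymptotic notation refers to $n\to\infty$ along these values, with $\epsilon,t,k_\pm$ fixed. *)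

theory Defs
  imports Complex_Main "HOL-Library.Function_Algebras"
begin

text \<open>Z^n is modelled as integer vectors indexed by nat, zero outside {0..<n}.\<close>
definition zvec :: "nat \<Rightarrow> (nat \<Rightarrow> int) set" where
  "zvec n = {x. \<forall>i\<ge>n. x i = 0}"

definition hwt :: "nat \<Rightarrow> (nat \<Rightarrow> int) \<Rightarrow> nat" where
  "hwt n x = card {i. i < n \<and> x i \<noteq> 0}"

definition ballB :: "nat \<Rightarrow> int \<Rightarrow> int \<Rightarrow> int \<Rightarrow> (nat \<Rightarrow> int) set" where
  "ballB n t kp km = {x \<in> zvec n. (\<forall>i<n. - km \<le> x i \<and> x i \<le> kp) \<and> int (hwt n x) \<le> t}"

definition is_lattice :: "nat \<Rightarrow> (nat \<Rightarrow> int) set \<Rightarrow> bool" where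
  "is_lattice n L \<longleftrightarrow> L \<subseteq> zvec n \<and> 0 \<in> L \<and> (\<forall>x\<in>L. \<forall>y\<in>L. x + y \<in> L) \<and> (\<forall>x\<in>L. - x \<in> L)"

definition quot :: "nat \<Rightarrow> (nat \<Rightarrow> int) set \<Rightarrow> (nat \<Rightarrow> int) set set" where
  "quot n L = zvec n // {(x, y). x \<in> zvec n \<and> y \<in> zvec n \<and> x - y \<in> L}"

definition lattice_vol :: "nat \<Rightarrow> (nat \<Rightarrow> int) set \<Rightarrow> nat" where
  "lattice_vol n L = card (quot n L)"

definition lambda_packs :: "nat \<Rightarrow> (nat \<Rightarrow> int) set \<Rightarrow> (nat \<Rightarrow> int) set \<Rightarrow> nat \<Rightarrow> bool" where
  "lambda_packs n B L lam \<longleftrightarrow>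
     (\<forall>z\<in>zvec n. card {v \<in> L. z \<in> (\<lambda>b. v + b) ` B} \<le> lam)"

definition density :: "(nat \<Rightarrow> int) set \<Rightarrow> nat \<Rightarrow> (nat \<Rightarrow> int) set \<Rightarrow> real" where
  "density B n L = real (card B) / real (lattice_vol n L)"

end

theory Submission
  imports Defs "HOL-Library.FuncSet" "HOL-Computational_Algebra.Primes" "HOL-Library.Infinite_Set"
begin

lemma supported_card:
  fixes W :: "nat set" and S :: "int set"
  assumes "finite W" "finite S"
  shows "finite {x. (\<forall>i. i \<notin> W \<longrightarrow> x i = 0) \<and> (\<forall>i\<in>W. x i \<in> S)}"
    and "card {x. (\<forall>i. i \<notin> W \<longrightarrow> x i = 0) \<and> (\<forall>i\<in>W. x i \<in> S)} \<le> card S ^ card W"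
proof -
  let ?X = "{x. (\<forall>i. i \<notin> W \<longrightarrow> x i = 0) \<and> (\<forall>i\<in>W. x i \<in> S)}"
  let ?g = "\<lambda>f i. if i \<in> W then f i else (0::int)"
  have sub: "?X \<subseteq> ?g ` (PiE W (\<lambda>_. S))"
  proof
    fix x assume x: "x \<in> ?X"
    have "x = ?g (restrict x W)" using x by (auto simp: fun_eq_iff restrict_def)
    moreover have "restrict x W \<in> PiE W (\<lambda>_. S)" using x by auto
    ultimately show "x \<in> ?g ` (PiE W (\<lambda>_. S))" by blast
  qed
  have fin: "finite (PiE W (\<lambda>_. S))" using assms by (simp add: finite_PiE)
  show "finite ?X" using finite_subset[OF sub] fin by blast
  have "card ?X \<le> card (?g ` (PiE W (\<lambda>_. S)))" by (rule card_mono[OF finite_imageI[OF fin] sub])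
  also have "\<dots> \<le> card (PiE W (\<lambda>_. S))" by (rule card_image_le[OF fin])
  also have "\<dots> = card S ^ card W" using assms by (simp add: card_PiE prod_constant)
  finally show "card ?X \<le> card S ^ card W" .
qed

lemma ballB_sub:
  "ballB n t kp km \<subseteq> {x. (\<forall>i. i \<notin> {..<n} \<longrightarrow> x i = 0) \<and> (\<forall>i\<in>{..<n}. x i \<in> {-km..kp})}"
  by (auto simp: ballB_def zvec_def)

lemma ballB_finite: "finite (ballB n t kp km)"
  by (rule finite_subset[OF ballB_sub supported_card(1)]) auto

lemma ballB_lower:
  fixes T :: nat
  assumes "0 \<le> km" "1 \<le> kp" "int T \<le> t"
  shows "n choose T \<le> card (ballB n t kp km)"
proof -
  define ind :: "nat set \<Rightarrow> nat \<Rightarrow> int" where "ind = (\<lambda>A i. if i \<in> A then (1::int) else 0)"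
  define AA :: "nat set set" where "AA = {A. A \<subseteq> {..<n} \<and> card A = T}"
  have e1: "n choose T = card AA"
    using n_subsets[of "{..<n}" T] by (simp add: AA_def)
  have inj: "inj_on ind AA"
  proof (rule inj_onI)
    fix A B :: "nat set" assume h: "ind A = ind B"
    show "A = B"
    proof (rule set_eqI)
      fix i from fun_cong[OF h, of i] show "i \<in> A \<longleftrightarrow> i \<in> B" by (simp add: ind_def split: if_splits)
    qed
  qed
  have sub: "ind ` AA \<subseteq> ballB n t kp km"
  proof
    fix x assume "x \<in> ind ` AA"
    then obtain A where A: "A \<subseteq> {..<n}" "card A = T" and x: "x = ind A" by (auto simp: AA_def)
    have "{i. i < n \<and> x i \<noteq> 0} = A" using A x by (auto simp: ind_def)
    then have "hwt n x = T" using A by (simp add: hwt_def)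
    moreover have "x \<in> zvec n" using A x by (auto simp: zvec_def ind_def)
    moreover have "\<forall>i<n. - km \<le> x i \<and> x i \<le> kp" using x assms by (simp add: ind_def)
    ultimately show "x \<in> ballB n t kp km" using assms by (simp add: ballB_def)
  qed
  have "card AA = card (ind ` AA)" using card_image[OF inj] by simp
  also have "\<dots> \<le> card (ballB n t kp km)" by (rule card_mono[OF ballB_finite sub])
  finally show ?thesis using e1 by simp
qed

lemma ballB_upper:
  fixes T :: nat
  assumes "t \<le> int T" "0 \<le> km" "0 \<le> kp" "1 \<le> n"
  shows "card (ballB n t kp km) \<le> (Suc T * nat (kp + km + 1) ^ T) * n ^ T"
proof -
  let ?K = "nat (kp + km + 1)"
  let ?Sup = "\<lambda>W. {x. (\<forall>i. i \<notin> W \<longrightarrow> x i = 0) \<and> (\<forall>i\<in>W. x i \<in> {-km..kp})}"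
  let ?A = "\<lambda>i. {W. W \<subseteq> {..<n} \<and> card W = i}"
  have sub: "ballB n t kp km \<subseteq> (\<Union>i\<in>{..T}. \<Union>W\<in>?A i. ?Sup W)"
  proof
    fix x assume x: "x \<in> ballB n t kp km"
    let ?W = "{i. i < n \<and> x i \<noteq> 0}"
    have "card ?W \<le> T" using x assms by (auto simp: ballB_def hwt_def)
    moreover have "x \<in> ?Sup ?W" using x by (auto simp: ballB_def zvec_def)
    moreover have "?W \<in> ?A (card ?W)" by auto
    ultimately show "x \<in> (\<Union>i\<in>{..T}. \<Union>W\<in>?A i. ?Sup W)"
      by (intro UN_I[of "card ?W"] UN_I[of ?W]) auto
  qed
  have cS: "card (?Sup W) \<le> ?K ^ T" if "W \<in> ?A i" "i \<le> T" for W i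
  proof -
    have fW: "finite W" using that by (auto intro: finite_subset[of W "{..<n}"])
    have "card (?Sup W) \<le> card {-km..kp} ^ card W" by (rule supported_card(2)[OF fW]) auto
    also have "\<dots> = ?K ^ card W" by simp
    also have "\<dots> \<le> ?K ^ T" using that assms
      by (intro power_increasing) auto
    finally show ?thesis .
  qed
  have "card (ballB n t kp km) \<le> card (\<Union>i\<in>{..T}. \<Union>W\<in>?A i. ?Sup W)"
  proof (rule card_mono[OF _ sub])
    show "finite (\<Union>i\<in>{..T}. \<Union>W\<in>?A i. ?Sup W)"
    proof (intro finite_UN_I)
      show "finite {..T}" by simp
      fix i show "finite (?A i)" by (rule finite_subset[of _ "Pow {..<n}"]) auto
      fix W assume "W \<in> ?A i"
      then have "finite W" by (auto intro: finite_subset[of W "{..<n}"])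
      then show "finite (?Sup W)" by (rule supported_card(1)) simp
    qed
  qed
  also have "\<dots> \<le> (\<Sum>i\<in>{..T}. card (\<Union>W\<in>?A i. ?Sup W))" by (rule card_UN_le) simp
  also have "\<dots> \<le> (\<Sum>i\<in>{..T}. (\<Sum>W\<in>?A i. card (?Sup W)))"
    by (intro sum_mono card_UN_le) (rule finite_subset[of _ "Pow {..<n}"], auto)
  also have "\<dots> \<le> (\<Sum>i\<in>{..T}. (\<Sum>W\<in>?A i. ?K ^ T))"
    by (intro sum_mono cS) auto
  also have "\<dots> = (\<Sum>i\<in>{..T}. (n choose i) * ?K ^ T)"
    using n_subsets[of "{..<n}"] by simp
  also have "\<dots> \<le> (\<Sum>i\<in>{..T}. n ^ T * ?K ^ T)"
  proof (intro sum_mono mult_right_mono)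
    fix i assume i: "i \<in> {..T}"
    show "n choose i \<le> n ^ T"
    proof (cases "i \<le> n")
      case True
      then have "n choose i \<le> n ^ i" by (rule binomial_le_pow)
      also have "\<dots> \<le> n ^ T" using i assms by (intro power_increasing) auto
      finally show ?thesis .
    qed (simp add: binomial_eq_0)
  qed simp
  also have "\<dots> = (Suc T * ?K ^ T) * n ^ T" by (simp add: algebra_simps)
  finally show ?thesis .
qed

definition syn :: "nat \<Rightarrow> nat \<Rightarrow> nat \<Rightarrow> (nat \<times> nat \<Rightarrow> int) \<Rightarrow> (nat \<Rightarrow> int) \<Rightarrow> nat \<Rightarrow> int" where
  "syn n j q H x = (\<lambda>r\<in>{..<j}. (\<Sum>i<n. x i * H (i, r)) mod int q)"

definition Lat :: "nat \<Rightarrow> nat \<Rightarrow> nat \<Rightarrow> (nat \<times> nat \<Rightarrow> int) \<Rightarrow> (nat \<Rightarrow> int) set" where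
  "Lat n j q H = {x \<in> zvec n. \<forall>r<j. int q dvd (\<Sum>i<n. x i * H (i, r))}"

lemma sum_diff_lin: fixes x y :: "nat \<Rightarrow> int" and H :: "nat \<times> nat \<Rightarrow> int" shows "(\<Sum>i<n. (x - y) i * H (i, r)) = (\<Sum>i<n. x i * H (i, r)) - (\<Sum>i<n. y i * H (i, r))"
proof -
  have "(\<Sum>i<n. (x - y) i * H (i, r)) = (\<Sum>i<n. x i * H (i, r) - y i * H (i, r))"
    by (rule sum.cong) (auto simp: left_diff_distrib)
  also have "\<dots> = (\<Sum>i<n. x i * H (i, r)) - (\<Sum>i<n. y i * H (i, r))"
    by (rule sum_subtractf)
  finally show ?thesis .
qed

lemma Lat_iff:
  assumes "x \<in> zvec n" "y \<in> zvec n"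
  shows "x - y \<in> Lat n j q H \<longleftrightarrow> syn n j q H x = syn n j q H y"
proof -
  have z: "x - y \<in> zvec n" using assms by (auto simp: zvec_def)
  have "x - y \<in> Lat n j q H \<longleftrightarrow> (\<forall>r<j. int q dvd (\<Sum>i<n. x i * H (i, r)) - (\<Sum>i<n. y i * H (i, r)))"
    using z unfolding Lat_def by (simp only: sum_diff_lin mem_Collect_eq simp_thms)
  also have "\<dots> \<longleftrightarrow> (\<forall>r<j. (\<Sum>i<n. x i * H (i, r)) mod int q = (\<Sum>i<n. y i * H (i, r)) mod int q)"
    by (simp add: mod_eq_dvd_iff)
  also have "\<dots> \<longleftrightarrow> syn n j q H x = syn n j q H y"
    unfolding syn_def
  proof
    assume "\<forall>r<j. (\<Sum>i<n. x i * H (i, r)) mod int q = (\<Sum>i<n. y i * H (i, r)) mod int q"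
    then show "(\<lambda>r\<in>{..<j}. (\<Sum>i<n. x i * H (i, r)) mod int q) = (\<lambda>r\<in>{..<j}. (\<Sum>i<n. y i * H (i, r)) mod int q)"
      by (intro restrict_ext) auto
  next
    assume h: "(\<lambda>r\<in>{..<j}. (\<Sum>i<n. x i * H (i, r)) mod int q) = (\<lambda>r\<in>{..<j}. (\<Sum>i<n. y i * H (i, r)) mod int q)"
    show "\<forall>r<j. (\<Sum>i<n. x i * H (i, r)) mod int q = (\<Sum>i<n. y i * H (i, r)) mod int q"
    proof (intro allI impI)
      fix r assume "r < j"
      then show "(\<Sum>i<n. x i * H (i, r)) mod int q = (\<Sum>i<n. y i * H (i, r)) mod int q"
        using fun_cong[OF h, of r] by simp
    qed
  qed
  finally show ?thesis .
qed

lemma Lat_lattice: "is_lattice n (Lat n j q H)"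
proof -
  have a: "x + y \<in> Lat n j q H" if "x \<in> Lat n j q H" "y \<in> Lat n j q H" for x y
  proof -
    have "x + y \<in> zvec n" using that by (auto simp: Lat_def zvec_def)
    moreover have "int q dvd (\<Sum>i<n. (x + y) i * H (i, r))" if "r < j" for r
    proof -
      have "(\<Sum>i<n. (x + y) i * H (i, r)) = (\<Sum>i<n. x i * H (i, r)) + (\<Sum>i<n. y i * H (i, r))"
        by (simp add: sum.distrib distrib_right)
      then show ?thesis using \<open>r < j\<close> \<open>x \<in> Lat n j q H\<close> \<open>y \<in> Lat n j q H\<close> by (simp add: Lat_def)
    qed
    ultimately show ?thesis by (simp add: Lat_def)
  qed
  have b: "- x \<in> Lat n j q H" if "x \<in> Lat n j q H" for x
  proof -
    have "- x \<in> zvec n" using that by (auto simp: Lat_def zvec_def)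
    moreover have "int q dvd (\<Sum>i<n. (- x) i * H (i, r))" if "r < j" for r
    proof -
      have "(\<Sum>i<n. (- x) i * H (i, r)) = - (\<Sum>i<n. x i * H (i, r))"
        by (simp add: sum_negf)
      then show ?thesis using \<open>r < j\<close> \<open>x \<in> Lat n j q H\<close> by (simp add: Lat_def)
    qed
    ultimately show ?thesis by (simp add: Lat_def)
  qed
  have "0 \<in> Lat n j q H" by (simp add: Lat_def zvec_def)
  moreover have "Lat n j q H \<subseteq> zvec n" by (auto simp: Lat_def)
  ultimately show ?thesis using a b by (simp add: is_lattice_def)
qed

lemma quot_bound:
  assumes "q > 0"
  shows "finite (quot n (Lat n j q H))" "card (quot n (Lat n j q H)) \<le> q ^ j"
    "1 \<le> card (quot n (Lat n j q H))"
proof -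
  let ?rel = "{(x, y). x \<in> zvec n \<and> y \<in> zvec n \<and> x - y \<in> Lat n j q H}"
  let ?g = "\<lambda>s. {y \<in> zvec n. syn n j q H y = s}"
  let ?P = "PiE {..<j} (\<lambda>_. {0..<int q})"
  have cls: "?rel `` {x} = ?g (syn n j q H x)" if "x \<in> zvec n" for x
    using that Lat_iff[of x n _ j q H] by auto
  have synP: "syn n j q H x \<in> ?P" for x
    using assms by (auto simp: syn_def)
  have sub: "quot n (Lat n j q H) \<subseteq> ?g ` ?P"
  proof
    fix X assume "X \<in> quot n (Lat n j q H)"
    then obtain x where "X = ?rel `` {x}" "x \<in> zvec n" unfolding quot_def by (rule quotientE)
    then have "X = ?g (syn n j q H x)" using cls by simp
    then show "X \<in> ?g ` ?P" using synP by blast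
  qed
  have finP: "finite ?P" by (simp add: finite_PiE)
  show fin: "finite (quot n (Lat n j q H))" using finite_subset[OF sub finite_imageI[OF finP]] .
  have "card (quot n (Lat n j q H)) \<le> card (?g ` ?P)" by (rule card_mono[OF finite_imageI[OF finP] sub])
  also have "\<dots> \<le> card ?P" by (rule card_image_le[OF finP])
  also have "\<dots> = q ^ j" by (simp add: card_PiE prod_constant)
  finally show "card (quot n (Lat n j q H)) \<le> q ^ j" .
  have z: "(0 :: nat \<Rightarrow> int) \<in> zvec n" by (simp add: zvec_def)
  have "?rel `` {0} \<in> quot n (Lat n j q H)" unfolding quot_def by (rule quotientI[OF z])
  then have "quot n (Lat n j q H) \<noteq> {}" by blast
  then show "1 \<le> card (quot n (Lat n j q H))" using fin by (simp add: Suc_le_eq card_gt_0_iff)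
qed

lemma pack_le_fiber:
  assumes "z \<in> zvec n"
  shows "card {v \<in> Lat n j q H. z \<in> (\<lambda>b. v + b) ` ballB n t kp km}
         \<le> card {b \<in> ballB n t kp km. syn n j q H b = syn n j q H z}"
proof (rule card_inj_on_le[where f = "\<lambda>v. z - v"])
  show "inj_on (\<lambda>v. z - v) {v \<in> Lat n j q H. z \<in> (\<lambda>b. v + b) ` ballB n t kp km}"
    by (rule inj_onI) simp
  show "finite {b \<in> ballB n t kp km. syn n j q H b = syn n j q H z}"
    using ballB_finite by simp
  show "(\<lambda>v. z - v) ` {v \<in> Lat n j q H. z \<in> (\<lambda>b. v + b) ` ballB n t kp km}
        \<subseteq> {b \<in> ballB n t kp km. syn n j q H b = syn n j q H z}"
  proof
    fix w assume "w \<in> (\<lambda>v. z - v) ` {v \<in> Lat n j q H. z \<in> (\<lambda>b. v + b) ` ballB n t kp km}"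
    then obtain v b where v: "v \<in> Lat n j q H" and b: "b \<in> ballB n t kp km" and zb: "z = v + b" and w: "w = z - v"
      by blast
    have wb: "w = b" using zb w by simp
    have bz: "b \<in> zvec n" using b by (simp add: ballB_def)
    have "z - b \<in> Lat n j q H" using zb v by simp
    then have "syn n j q H z = syn n j q H b" using Lat_iff[OF assms bz] by simp
    then show "w \<in> {b \<in> ballB n t kp km. syn n j q H b = syn n j q H z}" using wb b by simp
  qed
qed

definition tri :: "nat \<Rightarrow> nat \<Rightarrow> (nat \<Rightarrow> nat \<Rightarrow> int) \<Rightarrow> (nat \<Rightarrow> nat) \<Rightarrow> bool" where
  "tri n s b c \<longleftrightarrow> (\<forall>k\<in>{1..s}. c k < n \<and> b k (c k) \<noteq> 0 \<and> (\<forall>i<k. b i (c k) = 0))"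

definition Pch :: "nat \<Rightarrow> (nat \<Rightarrow> int) set \<Rightarrow> nat \<Rightarrow> bool" where
  "Pch n F s \<longleftrightarrow> (\<exists>b c. (\<forall>k\<le>s. b k \<in> F) \<and> tri n s b c)"

lemma fiber_step:
  assumes F: "F \<subseteq> ballB n t kp km" and T: "t \<le> int T" and km: "0 \<le> km" and kp: "0 \<le> kp"
    and P: "Pch n F s" and nP: "\<not> Pch n F (Suc s)"
  shows "card F \<le> nat (kp + km + 1) ^ (T * Suc s)"
proof -
  obtain b c where bF: "\<forall>k\<le>s. b k \<in> F" and tr: "tri n s b c" using P by (auto simp: Pch_def)
  define W where "W = (\<Union>k\<in>{..s}. {i. i < n \<and> b k i \<noteq> 0})"
  have Wn: "W \<subseteq> {..<n}" by (auto simp: W_def)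
  have fW: "finite W" using Wn finite_subset by blast
  have "card W \<le> (\<Sum>k\<in>{..s}. card {i. i < n \<and> b k i \<noteq> 0})" unfolding W_def by (rule card_UN_le) simp
  also have "\<dots> \<le> (\<Sum>k\<in>{..s}. T)"
  proof (rule sum_mono)
    fix k assume "k \<in> {..s}"
    then have "b k \<in> ballB n t kp km" using bF F by auto
    then have "int (hwt n (b k)) \<le> int T" using T by (simp add: ballB_def)
    then show "card {i. i < n \<and> b k i \<noteq> 0} \<le> T" by (simp add: hwt_def)
  qed
  also have "\<dots> = T * Suc s" by simp
  finally have cW: "card W \<le> T * Suc s" .
  have sub: "F \<subseteq> {x. (\<forall>i. i \<notin> W \<longrightarrow> x i = 0) \<and> (\<forall>i\<in>W. x i \<in> {-km..kp})}"
  proof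
    fix x assume xF: "x \<in> F"
    then have xB: "x \<in> ballB n t kp km" using F by auto
    have "x i = 0" if iW: "i \<notin> W" for i
    proof (rule ccontr)
      assume nz: "x i \<noteq> 0"
      have "i < n" using nz xB by (auto simp: ballB_def zvec_def) (meson not_less)
      define b' where "b' = b(Suc s := x)"
      define c' where "c' = c(Suc s := i)"
      have "\<forall>k\<le>Suc s. b' k \<in> F" using bF xF by (auto simp: b'_def le_Suc_eq)
      moreover have "tri n (Suc s) b' c'"
        unfolding tri_def
      proof
        fix k assume k: "k \<in> {1..Suc s}"
        show "c' k < n \<and> b' k (c' k) \<noteq> 0 \<and> (\<forall>i'<k. b' i' (c' k) = 0)"
        proof (cases "k = Suc s")
          case True
          have "\<forall>i'<k. b' i' i = 0"
          proof (intro allI impI)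
            fix i' assume "i' < k"
            then have "i' \<le> s" using True by simp
            then have "b i' i = 0" using iW \<open>i < n\<close> by (auto simp: W_def)
            then show "b' i' i = 0" using \<open>i' \<le> s\<close> by (simp add: b'_def)
          qed
          then show ?thesis using True \<open>i < n\<close> nz by (simp add: b'_def c'_def)
        next
          case False
          then have ks: "k \<in> {1..s}" using k by auto
          then have "c k < n \<and> b k (c k) \<noteq> 0 \<and> (\<forall>i'<k. b i' (c k) = 0)" using tr by (simp add: tri_def)
          then show ?thesis using ks by (simp add: b'_def c'_def)
        qed
      qed
      ultimately have "Pch n F (Suc s)" unfolding Pch_def by blast
      then show False using nP by simp
    qed
    moreover have "x i \<in> {-km..kp}" if "i \<in> W" for i
      using that Wn xB by (auto simp: ballB_def)
    ultimately show "x \<in> {x. (\<forall>i. i \<notin> W \<longrightarrow> x i = 0) \<and> (\<forall>i\<in>W. x i \<in> {-km..kp})}" by blast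
  qed
  have "card F \<le> card {x. (\<forall>i. i \<notin> W \<longrightarrow> x i = 0) \<and> (\<forall>i\<in>W. x i \<in> {-km..kp})}"
    by (rule card_mono[OF supported_card(1)[OF fW] sub]) simp
  also have "\<dots> \<le> card {-km..kp} ^ card W" by (rule supported_card(2)[OF fW]) simp
  also have "\<dots> = nat (kp + km + 1) ^ card W" by simp
  also have "\<dots> \<le> nat (kp + km + 1) ^ (T * Suc s)"
    using cW km kp by (intro power_increasing) auto
  finally show ?thesis .
qed

lemma fiber_bound:
  assumes F: "F \<subseteq> ballB n t kp km" and T: "t \<le> int T" and km: "0 \<le> km" and kp: "0 \<le> kp"
    and R: "1 \<le> R" and nP: "\<not> Pch n F R"
  shows "card F \<le> nat (kp + km + 1) ^ (T * R)"
proof (cases "F = {}")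
  case True then show ?thesis by simp
next
  case False
  then obtain x where xF: "x \<in> F" by blast
  have K1: "1 \<le> nat (kp + km + 1)" using km kp by simp
  have main: "\<forall>m. m \<le> R \<longrightarrow> Pch n F (R - m) \<longrightarrow> card F \<le> nat (kp + km + 1) ^ (T * R)"
  proof (intro allI)
    fix m show "m \<le> R \<longrightarrow> Pch n F (R - m) \<longrightarrow> card F \<le> nat (kp + km + 1) ^ (T * R)"
    proof (induction m)
      case 0 then show ?case using nP by simp
    next
      case (Suc m)
      show ?case
      proof (intro impI)
        assume m: "Suc m \<le> R" and P: "Pch n F (R - Suc m)"
        show "card F \<le> nat (kp + km + 1) ^ (T * R)"
        proof (cases "Pch n F (R - m)")
          case True then show ?thesis using Suc.IH m by simp
        next
          case False
          have e: "Suc (R - Suc m) = R - m" using m by simp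
          have "card F \<le> nat (kp + km + 1) ^ (T * Suc (R - Suc m))"
            by (rule fiber_step[OF F T km kp P]) (simp add: e False)
          also have "\<dots> \<le> nat (kp + km + 1) ^ (T * R)"
            using K1 m e by (intro power_increasing) auto
          finally show ?thesis .
        qed
      qed
    qed
  qed
  have "Pch n F 0" unfolding Pch_def tri_def using xF by (intro exI[of _ "\<lambda>_. x"]) auto
  then show ?thesis using main[rule_format, of R] by simp
qed

definition Hset :: "nat \<Rightarrow> nat \<Rightarrow> nat \<Rightarrow> (nat \<times> nat \<Rightarrow> int) set" where
  "Hset n j q = PiE ({..<n} \<times> {..<j}) (\<lambda>_. {0..<int q})"

definition Bad :: "nat \<Rightarrow> nat \<Rightarrow> nat \<Rightarrow> nat \<Rightarrow> (nat \<Rightarrow> nat \<Rightarrow> int) \<Rightarrow> (nat \<times> nat \<Rightarrow> int) set" where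
  "Bad R n j q b = {H \<in> Hset n j q. \<forall>k\<in>{1..R}. syn n j q H (b k) = syn n j q H (b 0)}"

lemma card_Hset: "card (Hset n j q) = q ^ (n * j)"
  by (simp add: Hset_def card_PiE prod_constant card_cartesian_product)

lemma finite_Hset: "finite (Hset n j q)"
  by (simp add: Hset_def finite_PiE)

lemma syn_dvd:
  assumes "syn n j q H x = syn n j q H y" "r < j"
  shows "int q dvd (\<Sum>i<n. x i * H (i, r)) - (\<Sum>i<n. y i * H (i, r))"
proof -
  have "(\<Sum>i<n. x i * H (i, r)) mod int q = (\<Sum>i<n. y i * H (i, r)) mod int q"
    using fun_cong[OF assms(1), of r] assms(2) by (simp add: syn_def)
  then show ?thesis by (simp add: mod_eq_dvd_iff)
qed

lemma sum_four:
  fixes u v :: "nat \<Rightarrow> int" and H H' :: "nat \<times> nat \<Rightarrow> int"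
  shows "(\<Sum>i<n. (u i - v i) * (H (i, r) - H' (i, r))) =
    ((\<Sum>i<n. u i * H (i, r)) - (\<Sum>i<n. v i * H (i, r))) - ((\<Sum>i<n. u i * H' (i, r)) - (\<Sum>i<n. v i * H' (i, r)))"
proof -
  have "(\<Sum>i<n. (u i - v i) * (H (i, r) - H' (i, r))) =
      (\<Sum>i<n. (u i * H (i, r) - v i * H (i, r)) - (u i * H' (i, r) - v i * H' (i, r)))"
    by (rule sum.cong) (auto simp: algebra_simps)
  also have "\<dots> = (\<Sum>i<n. u i * H (i, r) - v i * H (i, r)) - (\<Sum>i<n. u i * H' (i, r) - v i * H' (i, r))"
    by (rule sum_subtractf)
  also have "\<dots> = ((\<Sum>i<n. u i * H (i, r)) - (\<Sum>i<n. v i * H (i, r))) - ((\<Sum>i<n. u i * H' (i, r)) - (\<Sum>i<n. v i * H' (i, r)))"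
    by (simp only: sum_subtractf)
  finally show ?thesis .
qed

lemma bad_card:
  assumes q: "prime (int q)" and kpq: "kp < int q" and km: "0 \<le> km" "km \<le> kp"
    and tr: "tri n R b c" and bB: "\<forall>k\<le>R. b k \<in> ballB n t kp km"
  shows "card (Bad R n j q b) \<le> q ^ ((n - R) * j)"
proof -
  define C where "C = c ` {1..R}"
  have injc: "inj_on c {1..R}"
  proof (rule inj_onI)
    fix k1 k2 assume k1: "k1 \<in> {1..R}" and k2: "k2 \<in> {1..R}" and e: "c k1 = c k2"
    show "k1 = k2"
    proof (rule ccontr)
      assume "k1 \<noteq> k2"
      then consider "k1 < k2" | "k2 < k1" by linarith
      then show False
      proof cases
        case 1
        have "b k1 (c k2) = 0" using tr k2 1 by (auto simp: tri_def)
        moreover have "b k1 (c k1) \<noteq> 0" using tr k1 by (auto simp: tri_def)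
        ultimately show False using e by simp
      next
        case 2
        have "b k2 (c k1) = 0" using tr k1 2 by (auto simp: tri_def)
        moreover have "b k2 (c k2) \<noteq> 0" using tr k2 by (auto simp: tri_def)
        ultimately show False using e by simp
      qed
    qed
  qed
  have cC: "card C = R" unfolding C_def using card_image[OF injc] by simp
  have Cn: "C \<subseteq> {..<n}" using tr by (auto simp: C_def tri_def)
  define D where "D = ({..<n} - C) \<times> {..<j}"
  have cD: "card D = (n - R) * j"
    unfolding D_def using Cn cC by (simp add: card_cartesian_product card_Diff_subset finite_subset)
  define \<rho> where "\<rho> = (\<lambda>H :: nat \<times> nat \<Rightarrow> int. restrict H D)"
  have img: "\<rho> ` Bad R n j q b \<subseteq> PiE D (\<lambda>_. {0..<int q})"
    by (auto simp: \<rho>_def Bad_def Hset_def D_def PiE_def Pi_def)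
  have inj: "inj_on \<rho> (Bad R n j q b)"
  proof (rule inj_onI)
    fix H H' assume HB: "H \<in> Bad R n j q b" and HB': "H' \<in> Bad R n j q b" and e: "\<rho> H = \<rho> H'"
    have eD: "H p = H' p" if "p \<in> D" for p using fun_cong[OF e, of p] that by (simp add: \<rho>_def)
    have HS: "H \<in> Hset n j q" and HS': "H' \<in> Hset n j q" using HB HB' by (auto simp: Bad_def)
    have rng: "H (i, r) \<in> {0..<int q}" "H' (i, r) \<in> {0..<int q}" if "i < n" "r < j" for i r
      using HS HS' that by (auto simp: Hset_def PiE_def Pi_def)
    have claim: "\<forall>r<j. H (c k, r) = H' (c k, r)" if "k \<in> {1..R}" for k
      using that
    proof (induction k rule: less_induct)
      case (less k)
      show ?case
      proof (intro allI impI)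
        fix r assume r: "r < j"
        define \<Delta> where "\<Delta> = (\<lambda>i. H (i, r) - H' (i, r))"
        define d where "d = (\<lambda>i. b k i - b 0 i)"
        have s1: "int q dvd (\<Sum>i<n. b k i * H (i, r)) - (\<Sum>i<n. b 0 i * H (i, r))"
          using HB less.prems r by (intro syn_dvd) (auto simp: Bad_def)
        have s2: "int q dvd (\<Sum>i<n. b k i * H' (i, r)) - (\<Sum>i<n. b 0 i * H' (i, r))"
          using HB' less.prems r by (intro syn_dvd) (auto simp: Bad_def)
        have "int q dvd (\<Sum>i<n. d i * \<Delta> i)"
          unfolding d_def \<Delta>_def sum_four using s1 s2 by (rule dvd_diff)
        have tk: "c k < n" "b k (c k) \<noteq> 0" "\<forall>i<k. b i (c k) = 0" using tr less.prems by (auto simp: tri_def)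
        have zero: "d i * \<Delta> i = 0" if i: "i \<in> {..<n} - {c k}" for i
        proof (cases "i \<in> C")
          case False
          then have "(i, r) \<in> D" using i r by (auto simp: D_def)
          then show ?thesis using eD by (simp add: \<Delta>_def)
        next
          case True
          then obtain k' where k': "k' \<in> {1..R}" "i = c k'" by (auto simp: C_def)
          have "k' \<noteq> k" using i k' by auto
          then consider "k' < k" | "k < k'" by linarith
          then show ?thesis
          proof cases
            case 1
            then have "H (c k', r) = H' (c k', r)" using less.IH[OF 1 k'(1)] r by simp
            then show ?thesis using k' by (simp add: \<Delta>_def)
          next
            case 2
            have "\<forall>i<k'. b i (c k') = 0" using tr k'(1) by (auto simp: tri_def)
            then have "b k (c k') = 0" "b 0 (c k') = 0" using 2 by auto
            then show ?thesis using k' by (simp add: d_def)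
          qed
        qed
        have "(\<Sum>i<n. d i * \<Delta> i) = d (c k) * \<Delta> (c k) + (\<Sum>i\<in>{..<n} - {c k}. d i * \<Delta> i)"
          using tk(1) by (simp add: sum.remove)
        also have "(\<Sum>i\<in>{..<n} - {c k}. d i * \<Delta> i) = 0" using zero by (intro sum.neutral) blast
        also have "d (c k) = b k (c k)" using tk(3) less.prems by (simp add: d_def)
        finally have dv: "int q dvd b k (c k) * \<Delta> (c k)" using \<open>int q dvd (\<Sum>i<n. d i * \<Delta> i)\<close> by simp
        have bkB: "b k \<in> ballB n t kp km" using bB less.prems by auto
        have "b k (c k) \<in> {-km..kp}" using bkB tk(1) by (auto simp: ballB_def)
        then have absb: "\<bar>b k (c k)\<bar> < int q" using km kpq by auto
        have "\<not> int q dvd b k (c k)"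
        proof
          assume "int q dvd b k (c k)"
          then have "\<bar>int q\<bar> \<le> \<bar>b k (c k)\<bar>" using tk(2) by (intro dvd_imp_le_int) auto
          then show False using absb by simp
        qed
        then have dq: "int q dvd \<Delta> (c k)" using dv q by (simp add: prime_dvd_mult_iff)
        have "H (c k, r) \<in> {0..<int q}" "H' (c k, r) \<in> {0..<int q}" using rng tk(1) r by auto
        then have "\<bar>\<Delta> (c k)\<bar> < int q" by (auto simp: \<Delta>_def)
        then have "\<Delta> (c k) = 0" using dq dvd_imp_le_int[of "\<Delta> (c k)" "int q"] by force
        then show "H (c k, r) = H' (c k, r)" by (simp add: \<Delta>_def)
      qed
    qed
    show "H = H'"
    proof (rule PiE_ext)
      show "H \<in> PiE ({..<n} \<times> {..<j}) (\<lambda>_. {0..<int q})" using HS by (simp add: Hset_def)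
      show "H' \<in> PiE ({..<n} \<times> {..<j}) (\<lambda>_. {0..<int q})" using HS' by (simp add: Hset_def)
      fix p assume p: "p \<in> {..<n} \<times> {..<j}"
      then obtain i r where pir: "p = (i, r)" "i < n" "r < j" by auto
      show "H p = H' p"
      proof (cases "i \<in> C")
        case True
        then obtain k where "k \<in> {1..R}" "i = c k" by (auto simp: C_def)
        then show ?thesis using claim pir by auto
      next
        case False
        then show ?thesis using eD pir by (auto simp: D_def)
      qed
    qed
  qed
  have "card (Bad R n j q b) = card (\<rho> ` Bad R n j q b)" using card_image[OF inj] by simp
  also have "\<dots> \<le> card (PiE D (\<lambda>_. {0..<int q}))"
    by (rule card_mono[OF _ img]) (simp add: finite_PiE D_def)
  also have "\<dots> = q ^ card D" by (simp add: card_PiE prod_constant D_def)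
  finally show ?thesis using cD by simp
qed

lemma exists_good:
  assumes q: "prime (int q)" and kpq: "kp < int q" and km: "0 \<le> km" "km \<le> kp"
    and ineq: "card (ballB n t kp km) ^ Suc R * q ^ ((n - R) * j) < q ^ (n * j)"
  shows "\<exists>H\<in>Hset n j q. \<forall>z\<in>zvec n.
           \<not> Pch n {b \<in> ballB n t kp km. syn n j q H b = syn n j q H z} R"
proof -
  let ?B = "ballB n t kp km"
  define Tup where "Tup = PiE {..R} (\<lambda>_. ?B)"
  define Tup' where "Tup' = {b \<in> Tup. \<exists>c. tri n R b c}"
  define BadAll where "BadAll = (\<Union>b\<in>Tup'. Bad R n j q b)"
  have finT: "finite Tup" unfolding Tup_def using ballB_finite by (simp add: finite_PiE)
  have finT': "finite Tup'" using finT unfolding Tup'_def by simp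
  have "card BadAll \<le> (\<Sum>b\<in>Tup'. card (Bad R n j q b))" unfolding BadAll_def
    by (rule card_UN_le[OF finT'])
  also have "\<dots> \<le> (\<Sum>b\<in>Tup'. q ^ ((n - R) * j))"
  proof (rule sum_mono)
    fix b assume "b \<in> Tup'"
    then obtain c where "tri n R b c" and "\<forall>k\<le>R. b k \<in> ?B" by (auto simp: Tup'_def Tup_def)
    then show "card (Bad R n j q b) \<le> q ^ ((n - R) * j)" by (intro bad_card[OF q kpq km]) 
  qed
  also have "\<dots> \<le> (\<Sum>b\<in>Tup. q ^ ((n - R) * j))"
    by (rule sum_mono2[OF finT]) (auto simp: Tup'_def)
  also have "\<dots> = card ?B ^ Suc R * q ^ ((n - R) * j)"
    by (simp add: Tup_def card_PiE prod_constant)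
  also have "\<dots> < card (Hset n j q)" using ineq by (simp add: card_Hset)
  finally have "card BadAll < card (Hset n j q)" .
  moreover have "BadAll \<subseteq> Hset n j q" by (auto simp: BadAll_def Bad_def)
  then have "finite BadAll" using finite_Hset finite_subset by blast
  ultimately have "\<not> Hset n j q \<subseteq> BadAll"
    using card_mono[of BadAll "Hset n j q"] by (metis not_le)
  then obtain H where HS: "H \<in> Hset n j q" and HB: "H \<notin> BadAll" by blast
  have "\<forall>z\<in>zvec n. \<not> Pch n {b \<in> ?B. syn n j q H b = syn n j q H z} R"
  proof (intro ballI notI)
    fix z assume "z \<in> zvec n" "Pch n {b \<in> ?B. syn n j q H b = syn n j q H z} R"
    then obtain b c where bF: "\<forall>k\<le>R. b k \<in> {b \<in> ?B. syn n j q H b = syn n j q H z}"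
      and tr: "tri n R b c" unfolding Pch_def by blast
    define b' where "b' = restrict b {..R}"
    have "b' \<in> Tup" using bF by (auto simp: b'_def Tup_def)
    moreover have "tri n R b' c" using tr by (auto simp: tri_def b'_def)
    ultimately have "b' \<in> Tup'" unfolding Tup'_def by blast
    moreover have "H \<in> Bad R n j q b'"
      using HS bF by (auto simp: Bad_def b'_def)
    ultimately have "H \<in> BadAll" unfolding BadAll_def by blast
    then show False using HB by simp
  qed
  then show ?thesis using HS by blast
qed

lemma dens_calc:
  fixes q T m R d n Bc V :: nat and \<epsilon> :: real
  assumes q: "2 \<le> q" and T: "1 \<le> T" and TR: "real T \<le> real R * \<epsilon>" and n: "n = q ^ (R * m)"
    and Tn: "T \<le> n" and Bc: "n choose T \<le> Bc" and V1: "1 \<le> V" and V2: "V \<le> q ^ (T * m * Suc R + d)"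
  shows "(1 / (real T ^ T * real q ^ d)) * real n powr (- \<epsilon>) \<le> real Bc / real V"
proof -
  have qp: "(0::real) < real q" using q by simp
  have np: "(0::real) < real n" using n q by simp
  have Tp: "(0::real) < real T" using T by simp
  have "(real n / real T) ^ T \<le> real (n choose T)" by (rule binomial_ge_n_over_k_pow_k[OF Tn])
  also have "\<dots> \<le> real Bc" using Bc by simp
  finally have b1: "(real n / real T) ^ T \<le> real Bc" .
  have qj: "real (q ^ (T * m * Suc R + d)) = real n ^ T * real q ^ (T * m) * real q ^ d"
  proof -
    have e: "T * m * Suc R + d = (R * m) * T + T * m + d" by (simp add: algebra_simps)
    have "real (q ^ (T * m * Suc R + d)) = real q ^ ((R * m) * T) * real q ^ (T * m) * real q ^ d"
      unfolding e by (simp add: power_add)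
    also have "real q ^ ((R * m) * T) = real n ^ T" using n by (simp add: power_mult)
    finally show ?thesis .
  qed
  have "real Bc / real (q ^ (T * m * Suc R + d)) \<le> real Bc / real V"
    using V1 V2 q by (intro divide_left_mono) (auto simp: of_nat_le_iff[symmetric] simp del: of_nat_le_iff)
  moreover have "(real n / real T) ^ T / real (q ^ (T * m * Suc R + d)) \<le> real Bc / real (q ^ (T * m * Suc R + d))"
    using b1 q by (intro divide_right_mono) auto
  moreover have "(real n / real T) ^ T / real (q ^ (T * m * Suc R + d)) = 1 / (real T ^ T * real q ^ d) * (1 / real q ^ (T * m))"
    unfolding qj using np qp Tp by (simp add: power_divide field_simps)
  moreover have "real n powr (- \<epsilon>) \<le> 1 / real q ^ (T * m)"
  proof -
    have "real n = real q powr (real (R * m))" using n qp by (simp only: powr_realpow of_nat_power)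
    then have "real n powr (- \<epsilon>) = real q powr (- (real (R * m) * \<epsilon>))" by (simp add: powr_powr)
    also have "\<dots> \<le> real q powr (- real (T * m))"
    proof (rule powr_mono)
      have "real T * real m \<le> real R * \<epsilon> * real m" using TR by (intro mult_right_mono) auto
      then show "- (real (R * m) * \<epsilon>) \<le> - real (T * m)" by (simp add: algebra_simps)
      show "1 \<le> real q" using q by simp
    qed
    also have "\<dots> = inverse (real q powr (real (T * m)))" by (rule powr_minus)
    also have "real q powr (real (T * m)) = real q ^ (T * m)" using qp by (rule powr_realpow)
    also have "inverse (real q ^ (T * m)) = 1 / real q ^ (T * m)" by (simp add: divide_inverse)
    finally show ?thesis .
  qed
  moreover have "0 \<le> 1 / (real T ^ T * real q ^ d)" by simp
  ultimately show ?thesis by (smt (verit, best) mult_left_mono)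
qed

theorem corollary10:
  fixes kp km t :: int and \<epsilon> :: real
  assumes "0 \<le> km" and "km \<le> kp" and "kp + km \<ge> 1" and "t > 0" and "\<epsilon> > 0"
  shows "\<exists>lam :: nat. \<exists>S :: nat set. \<exists>L :: nat \<Rightarrow> (nat \<Rightarrow> int) set.
           infinite S \<and>
           (\<forall>n\<in>S. is_lattice n (L n) \<and> finite (quot n (L n)) \<and>
                    lambda_packs n (ballB n t kp km) (L n) lam) \<and>
           (\<exists>c > 0. \<exists>N0. \<forall>n\<in>S. n \<ge> N0 \<longrightarrow>
                density (ballB n t kp km) n (L n) \<ge> c * real n powr (- \<epsilon>))"
proof -
  define T where "T = nat t"
  have tT: "t = int T" "1 \<le> T" using assms(4) by (auto simp: T_def)
  have kp0: "0 \<le> kp" and kp1: "1 \<le> kp" using assms(1,2,3) by auto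
  define K where "K = nat (kp + km + 1)"
  define A where "A = Suc T * K ^ T"
  define R where "R = nat \<lceil>real T / \<epsilon>\<rceil> + 1"
  have R1: "1 \<le> R" by (simp add: R_def)
  have TR: "real T \<le> real R * \<epsilon>"
  proof -
    have "real T / \<epsilon> \<le> real (nat \<lceil>real T / \<epsilon>\<rceil>)"
      by (metis le_nat_iff of_nat_nat real_nat_ceiling_ge)
    also have "\<dots> \<le> real R" by (simp add: R_def)
    finally have "real T / \<epsilon> \<le> real R" .
    then show ?thesis using assms(5) by (simp add: pos_divide_le_eq)
  qed
  obtain q where q: "prime q" "nat kp < q" using bigger_prime by blast
  have q2: "2 \<le> q" using q(1) by (rule prime_ge_2_nat)
  have qi: "prime (int q)" using q(1) by simp
  have kpq: "kp < int q"
  proof -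
    have e: "int (nat kp) = kp" using kp0 by simp
    have "int (nat kp) < int q" using q(2) by (simp only: of_nat_less_iff)
    then show ?thesis unfolding e .
  qed
  define d where "d = A * Suc R"
  define J where "J = (\<lambda>m. T * m * Suc R + d)"
  define M where "M = (\<lambda>n. SOME m. n = q ^ (R * m) \<and> 1 \<le> m)"
  define S where "S = range (\<lambda>m. q ^ (R * Suc m))"
  define good where "good = (\<lambda>n H. H \<in> Hset n (J (M n)) q \<and> (\<forall>z\<in>zvec n.
      \<not> Pch n {b \<in> ballB n t kp km. syn n (J (M n)) q H b = syn n (J (M n)) q H z} R))"
  define HH where "HH = (\<lambda>n. SOME H. good n H)"
  define L where "L = (\<lambda>n. Lat n (J (M n)) q (HH n))"
  have Mn: "n = q ^ (R * M n) \<and> 1 \<le> M n" if "n \<in> S" for n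
  proof -
    from that obtain m0 where "n = q ^ (R * Suc m0)" by (auto simp: S_def)
    then have "\<exists>m. n = q ^ (R * m) \<and> 1 \<le> m" by (intro exI[of _ "Suc m0"]) simp
    then show ?thesis unfolding M_def by (rule someI_ex)
  qed
  have key: "good n (HH n)" if nS: "n \<in> S" for n
  proof -
    define m where "m = M n"
    define j where "j = J m"
    have nm: "n = q ^ (R * m)" "1 \<le> m" using Mn[OF nS] by (auto simp: m_def)
    have n1: "1 \<le> n" using nm q2 by simp
    have "R < 2 ^ R" by (rule less_exp)
    also have "(2::nat) ^ R \<le> q ^ R" using q2 by (rule power_mono) simp
    also have "q ^ R \<le> q ^ (R * m)" using q2 nm(2) by (intro power_increasing) auto
    finally have Rn: "R \<le> n" using nm by simp
    have cB: "card (ballB n t kp km) \<le> A * n ^ T"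
      unfolding A_def K_def using ballB_upper[of t T km kp n] tT assms(1) kp0 n1 by simp
    have h1: "card (ballB n t kp km) ^ Suc R \<le> (A * n ^ T) ^ Suc R" using cB by (rule power_mono) simp
    have h2: "(A * n ^ T) ^ Suc R = A ^ Suc R * q ^ (R * m * T * Suc R)"
    proof -
      have "(A * n ^ T) ^ Suc R = A ^ Suc R * (n ^ T) ^ Suc R" by (rule power_mult_distrib)
      also have "(n ^ T) ^ Suc R = q ^ (R * m * T * Suc R)"
        unfolding nm(1) by (simp only: power_mult[symmetric] mult.assoc)
      finally show ?thesis .
    qed
    have "A ^ Suc R < (2 ^ A) ^ Suc R" by (rule power_strict_mono) (auto intro: less_exp)
    also have "((2::nat) ^ A) ^ Suc R = 2 ^ d" unfolding d_def by (rule power_mult[symmetric])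
    also have "(2::nat) ^ d \<le> q ^ d" using q2 by (rule power_mono) simp
    also have "q ^ d \<le> q ^ (R * d)" using q2 R1 by (intro power_increasing) auto
    finally have h3: "A ^ Suc R < q ^ (R * d)" .
    have h4: "q ^ (R * j) = q ^ (R * m * T * Suc R) * q ^ (R * d)"
      by (simp add: j_def J_def power_add[symmetric] algebra_simps)
    have qpos: "0 < q ^ (R * m * T * Suc R)" using q2 by simp
    have "card (ballB n t kp km) ^ Suc R < q ^ (R * j)"
      using h1 h2 h3 h4 qpos by (metis mult.commute mult_less_cancel2 order.strict_trans1)
    then have "card (ballB n t kp km) ^ Suc R * q ^ ((n - R) * j) < q ^ (R * j) * q ^ ((n - R) * j)"
      using q2 by simp
    also have "\<dots> = q ^ (n * j)"
    proof -
      have "R * j + (n - R) * j = n * j" using Rn by (simp add: add_mult_distrib[symmetric])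
      then show ?thesis by (simp add: power_add[symmetric])
    qed
    finally have ineq: "card (ballB n t kp km) ^ Suc R * q ^ ((n - R) * j) < q ^ (n * j)" .
    have "\<exists>H. good n H"
      using exists_good[OF qi kpq assms(1,2) ineq] unfolding good_def j_def m_def by blast
    then show ?thesis unfolding HH_def by (rule someI_ex)
  qed
  have infS: "infinite S"
  proof -
    have "inj (\<lambda>m. q ^ (R * Suc m))"
    proof (rule injI)
      fix a b assume "q ^ (R * Suc a) = q ^ (R * Suc b)"
      then have "R * Suc a = R * Suc b" using q2 by simp
      then show "a = b" using R1 by simp
    qed
    then show ?thesis unfolding S_def by (rule range_inj_infinite)
  qed
  have part2: "\<forall>n\<in>S. is_lattice n (L n) \<and> finite (quot n (L n)) \<and>
                    lambda_packs n (ballB n t kp km) (L n) (K ^ (T * R))"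
  proof
    fix n assume nS: "n \<in> S"
    have g: "good n (HH n)" by (rule key[OF nS])
    have "lambda_packs n (ballB n t kp km) (L n) (K ^ (T * R))"
      unfolding lambda_packs_def
    proof
      fix z assume z: "z \<in> zvec n"
      have "card {v \<in> L n. z \<in> (\<lambda>b. v + b) ` ballB n t kp km}
         \<le> card {b \<in> ballB n t kp km. syn n (J (M n)) q (HH n) b = syn n (J (M n)) q (HH n) z}"
        unfolding L_def by (rule pack_le_fiber[OF z])
      also have "\<dots> \<le> K ^ (T * R)"
        unfolding K_def
        by (rule fiber_bound[of _ n t kp km T]) (use g z tT assms(1) kp0 R1 in \<open>auto simp: good_def\<close>)
      finally show "card {v \<in> L n. z \<in> (\<lambda>b. v + b) ` ballB n t kp km} \<le> K ^ (T * R)" .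
    qed
    then show "is_lattice n (L n) \<and> finite (quot n (L n)) \<and>
                    lambda_packs n (ballB n t kp km) (L n) (K ^ (T * R))"
      using Lat_lattice quot_bound(1)[of q] q2 by (simp add: L_def)
  qed
  have part3: "\<forall>n\<in>S. n \<ge> T \<longrightarrow>
                density (ballB n t kp km) n (L n) \<ge> (1 / (real T ^ T * real q ^ d)) * real n powr (- \<epsilon>)"
  proof (intro ballI impI)
    fix n assume nS: "n \<in> S" and Tn: "T \<le> n"
    have nm: "n = q ^ (R * M n)" using Mn[OF nS] by simp
    have qp: "0 < q" using q2 by simp
    show "density (ballB n t kp km) n (L n) \<ge> (1 / (real T ^ T * real q ^ d)) * real n powr (- \<epsilon>)"
      unfolding density_def lattice_vol_def L_def
    proof (rule dens_calc[OF q2 tT(2) TR nm Tn])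
      show "n choose T \<le> card (ballB n t kp km)" using ballB_lower[of km kp T t n] assms(1) kp1 tT by simp
      show "1 \<le> card (quot n (Lat n (J (M n)) q (HH n)))" by (rule quot_bound(3)[OF qp])
      show "card (quot n (Lat n (J (M n)) q (HH n))) \<le> q ^ (T * M n * Suc R + d)"
        using quot_bound(2)[OF qp] by (simp add: J_def)
    qed
  qed
  have cpos: "(0::real) < 1 / (real T ^ T * real q ^ d)" using tT q2 by simp
  show ?thesis
    using infS part2 part3 cpos by blast
qed

end
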